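(* For every $\alpha\ge 1$ there exists a chore allocation instance (with three agents and monotone cost functions) that admits a maximin share fair allocation but admits no $\alpha$-EFX allocation. That is, the existence of an MMS allocation does not imply the existence of an $\alpha$-EFX allocation for any $\alpha \ge 1$.
   Context: A chore allocation instance consists of a set $N=\{1,\dots,n\}$ of agents, a finite set $M$ of chores, and for each agent $i$ a normalized ($c_i(\emptyset)=0$), monotone ($c_i(S\cup\{e\})\ge c_i(S)$) cost function $c_i:2^M\to\mathbb{R}_{\ge0}$. An allocation is a partition $X=(X_1,\dots,X_n)$ of $M$ with agent $i$ receiving $X_i$. For $\alpha\ge1$, $X$ is $\alpha$-EFX if for all agents $i,j$ and every $e\in X_i$, $c_i(X_i\setminus\{e\})\le\alpha\cdot c_i(X_j)$. The maximin share of agent $i$ is $\mu_i^n(M)=\min_{Y\in\Pi_n(M)}\max_{k\in[n]} c_i(Y_k)$, where $\Pi_n(M)$ is the set of partitions of $M$ into $n$ bundles; an allocation $X$ is maximin share fair (MMS) if $c_i(X_i)\le \mu_i^n(M)$ for every agent $i$. *)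

theory Defs
  imports Complex_Main
begin

text \<open>An allocation/partition into n bundles is a function X from agent indices to bundles
  (only the values on {..<n} matter), with bundles pairwise disjoint and covering M.
  Empty bundles are allowed.\<close>

definition is_partition :: "nat \<Rightarrow> 'c set \<Rightarrow> (nat \<Rightarrow> 'c set) \<Rightarrow> bool" where
  "is_partition n M X \<longleftrightarrow>
     (\<forall>i<n. X i \<subseteq> M) \<and> (\<Union>i<n. X i) = M \<and>
     (\<forall>i<n. \<forall>j<n. i \<noteq> j \<longrightarrow> X i \<inter> X j = {})"

definition valid_cost :: "'c set \<Rightarrow> ('c set \<Rightarrow> real) \<Rightarrow> bool" where
  "valid_cost M c \<longleftrightarrow> c {} = 0 \<and> (\<forall>S \<subseteq> M. c S \<ge> 0) \<and>
     (\<forall>S e. S \<subseteq> M \<longrightarrow> e \<in> M \<longrightarrow> c (insert e S) \<ge> c S)"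

definition chore_instance :: "nat \<Rightarrow> 'c set \<Rightarrow> (nat \<Rightarrow> 'c set \<Rightarrow> real) \<Rightarrow> bool" where
  "chore_instance n M c \<longleftrightarrow> finite M \<and> (\<forall>i<n. valid_cost M (c i))"

definition alpha_EFX :: "real \<Rightarrow> nat \<Rightarrow> (nat \<Rightarrow> 'c set \<Rightarrow> real) \<Rightarrow> (nat \<Rightarrow> 'c set) \<Rightarrow> bool" where
  "alpha_EFX \<alpha> n c X \<longleftrightarrow>
     (\<forall>i<n. \<forall>j<n. \<forall>e\<in>X i. c i (X i - {e}) \<le> \<alpha> * c i (X j))"

definition mms :: "nat \<Rightarrow> 'c set \<Rightarrow> ('c set \<Rightarrow> real) \<Rightarrow> real" where
  "mms n M ci = Min {Max ((\<lambda>k. ci (Y k)) ` {..<n}) | Y. is_partition n M Y}"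

definition is_MMS :: "nat \<Rightarrow> 'c set \<Rightarrow> (nat \<Rightarrow> 'c set \<Rightarrow> real) \<Rightarrow> (nat \<Rightarrow> 'c set) \<Rightarrow> bool" where
  "is_MMS n M c X \<longleftrightarrow> (\<forall>i<n. c i (X i) \<le> mms n M (c i))"

end

theory Submission imports Defs begin

definition gens :: "nat \<Rightarrow> nat \<Rightarrow> nat set list" where
  "gens i k = (if i = 0 then
      (if k = 1 then [{1},{2},{4},{3,5}] else if k = 2 then [{1},{2},{0,4},{3,5}]
       else [{0,1},{0,2},{1,2},{0,4},{1,4},{2,4},{3,5}])
    else if i = 1 then
      (if k = 1 then [{1},{2},{3,4},{5}] else if k = 2 then [{1},{2},{3,4},{0,5}]
       else [{0,1},{0,2},{2,3},{2,4},{3,4},{0,5},{1,5}])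
    else
      (if k = 1 then [{1},{2},{3},{4,5}] else if k = 2 then [{1},{2},{0,3},{4,5}]
       else [{0,1},{1,2},{0,3},{1,3},{2,3},{0,2,4},{1,5},{0,2,5},{4,5}]))"

definition up :: "nat \<Rightarrow> nat \<Rightarrow> nat set \<Rightarrow> bool" where
  "up i k S = (\<exists>G\<in>set (gens i k). G \<subseteq> S)"

definition lev :: "nat \<Rightarrow> nat set \<Rightarrow> nat" where
  "lev i S = (if up i 3 S then 3 else if up i 2 S then 2 else if up i 1 S then 1 else 0)"

definition val :: "real \<Rightarrow> nat \<Rightarrow> real" where
  "val a n = (if n = 0 then 0 else if n = 1 then 1 else if n = 2 then 2 * a else 4 * a^2)"

definition cst :: "real \<Rightarrow> nat \<Rightarrow> nat set \<Rightarrow> real" where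
  "cst a i S = val a (lev i S)"

definition bund :: "nat list \<Rightarrow> nat \<Rightarrow> nat set" where
  "bund g i = set (map snd (filter (\<lambda>p. fst p = i) (zip g [0..<6])))"

lemma viol:
  assumes "1 \<le> a" "l < k" "k \<le> 3"
  shows "(val a k \<le> a * val a l) = False"
proof -
  have "l = 0 \<or> l = 1 \<or> l = 2" "k = 1 \<or> k = 2 \<or> k = 3" using assms by auto
  then show ?thesis using assms
    by (auto simp: val_def power2_eq_square)
qed

lemma all_less_3: "(\<forall>i<(3::nat). P i) = (P 0 \<and> P 1 \<and> P 2)"
proof -
  have "\<And>i::nat. i < 3 \<longleftrightarrow> i = 0 \<or> i = 1 \<or> i = 2" by auto
  then show ?thesis by auto
qed

fun exf :: "('a \<Rightarrow> bool) \<Rightarrow> 'a list \<Rightarrow> bool" where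
  "exf P [] = False"
| "exf P (x # xs) = (if P x then True else exf P xs)"

lemma exf_iff: "exf P xs = (\<exists>x\<in>set xs. P x)"
  by (induction xs) auto

fun allf :: "('a \<Rightarrow> bool) \<Rightarrow> 'a list \<Rightarrow> bool" where
  "allf P [] = True"
| "allf P (x # xs) = (if P x then allf P xs else False)"

lemma allf_iff: "allf P xs = (\<forall>x\<in>set xs. P x)"
  by (induction xs) auto

definition cands :: "(nat \<times> nat \<times> nat) list" where
  "cands = [(i,e,j). i \<leftarrow> [0,1,2], e \<leftarrow> [0,1,2,3,4,5], j \<leftarrow> [0,1,2]]"

definition violates :: "nat list \<Rightarrow> nat \<times> nat \<times> nat \<Rightarrow> bool" where
  "violates g t = (case t of (i,e,j) \<Rightarrow>
     (if g ! e = i then lev i (bund g j) < lev i (bund g i - {e}) else False))"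

lemma comb: "allf (\<lambda>g. exf (violates g) cands) (List.n_lists 6 [0,1,2])"
  by code_simp

lemma nlists6: "length g = 6 \<Longrightarrow> set g \<subseteq> {0,1,2} \<Longrightarrow> g \<in> set (List.n_lists 6 [0,1,2::nat])"
  by (simp add: set_n_lists)

lemma comb_g:
  assumes "length g = 6" "set g \<subseteq> {0,1,2}"
  shows "\<exists>i<3. \<exists>e\<in>bund g i. \<exists>j<3. lev i (bund g j) < lev i (bund g i - {e})"
proof -
  have "exf (violates g) cands" using comb nlists6[OF assms] by (simp add: allf_iff)
  then obtain i e j where c: "(i,e,j) \<in> set cands" and v: "violates g (i,e,j)"
    unfolding exf_iff by auto
  have ij: "i < 3" "j < 3" "e < 6" using c by (auto simp: cands_def)
  have gi: "g ! e = i" using v by (auto simp: violates_def split: if_splits)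
  have "(g ! e, [0..<6] ! e) \<in> set (zip g [0..<6])"
    using ij(3) assms(1) by (auto simp: set_zip)
  then have "(i, e) \<in> set (zip g [0..<6])" using ij(3) gi by simp
  then have eb: "e \<in> bund g i" unfolding bund_def by force
  have "lev i (bund g j) < lev i (bund g i - {e})" using v gi by (simp add: violates_def)
  then show ?thesis using ij eb by blast
qed

lemma lev_le3: "lev i S \<le> 3"
  by (simp add: lev_def)

lemma bund_eq:
  assumes "length g = 6"
  shows "bund g i = {k. k < 6 \<and> g ! k = i}"
proof
  show "bund g i \<subseteq> {k. k < 6 \<and> g ! k = i}"
    unfolding bund_def using assms by (auto simp: set_zip)
  show "{k. k < 6 \<and> g ! k = i} \<subseteq> bund g i"
  proof
    fix k assume k: "k \<in> {k. k < 6 \<and> g ! k = i}"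
    then have "(g ! k, [0..<6] ! k) \<in> set (zip g [0..<6])"
      using assms by (auto simp: set_zip)
    then have "(i, k) \<in> set (zip g [0..<6])" using k by simp
    then show "k \<in> bund g i" unfolding bund_def by force
  qed
qed

lemma part_repr:
  assumes "is_partition 3 {0..<6::nat} X"
  shows "\<exists>g. length g = 6 \<and> set g \<subseteq> {0,1,2} \<and> (\<forall>i<3. X i = bund g i)"
proof -
  define h where "h k = (if k \<in> X 0 then 0 else if k \<in> X 1 then 1 else (2::nat))" for k
  define g where "g = map h [0..<6]"
  have P: "(\<forall>i<3. X i \<subseteq> {0..<6}) \<and> (\<Union>i<3. X i) = {0..<6} \<and>
    (\<forall>i<3. \<forall>j<3. i \<noteq> j \<longrightarrow> X i \<inter> X j = {})"
    using assms unfolding is_partition_def .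
  have l3: "{..<3::nat} = {0,1,2}" by auto
  have cov: "X 0 \<union> X 1 \<union> X 2 = {0..<6}" using P l3 by (simp add: Un_assoc)
  have d01: "X 0 \<inter> X 1 = {}" using P by simp
  have d02: "X 0 \<inter> X 2 = {}" using P by simp
  have d12: "X 1 \<inter> X 2 = {}" using P by simp
  have lg: "length g = 6" unfolding g_def by simp
  have gk: "g ! k = h k" if "k < 6" for k unfolding g_def using that by simp
  have b: "bund g i = {k. k < 6 \<and> h k = i}" for i
    using bund_eq[OF lg] gk by auto
  have "X i = bund g i" if "i < 3" for i
  proof -
    have "X 0 = {k. k < 6 \<and> h k = 0}" unfolding h_def using cov by auto
    moreover have "X 1 = {k. k < 6 \<and> h k = 1}" unfolding h_def using cov d01 by auto
    moreover have "X 2 = {k. k < 6 \<and> h k = 2}" unfolding h_def using cov d02 d12 by auto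
    moreover have "i = 0 \<or> i = 1 \<or> i = 2" using that by auto
    ultimately show ?thesis unfolding b by auto
  qed
  moreover have "set g \<subseteq> {0,1,2}" unfolding g_def h_def by auto
  ultimately show ?thesis using lg by blast
qed

lemma val_mono: "1 \<le> a \<Longrightarrow> m \<le> n \<Longrightarrow> val a m \<le> val a n"
proof -
  assume a: "1 \<le> a" and mn: "m \<le> n"
  have h1: "1 \<le> 2 * a" using a by simp
  have "2 * a * 1 \<le> 2 * a * (2 * a)" using a by (intro mult_left_mono) auto
  then have h2: "2 * a \<le> 4 * a^2" by (simp add: power2_eq_square)
  show ?thesis using h1 h2 mn by (auto simp: val_def)
qed

lemma val_nonneg: "1 \<le> a \<Longrightarrow> 0 \<le> val a n"
  using val_mono[of a 0 n] by (simp add: val_def)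

lemma up_mono: "S \<subseteq> T \<Longrightarrow> up i k S \<Longrightarrow> up i k T"
  unfolding up_def by blast

lemma lev_mono: "S \<subseteq> T \<Longrightarrow> lev i S \<le> lev i T"
  unfolding lev_def using up_mono[of S T i] by auto

lemma lev_empty: "lev i {} = 0"
  by (simp add: lev_def up_def gens_def)

lemma valid: "1 \<le> a \<Longrightarrow> valid_cost M (cst a i)"
proof -
  assume a: "1 \<le> a"
  have "val a 0 = 0" by (simp add: val_def)
  moreover have "\<And>S e. val a (lev i S) \<le> val a (lev i (insert e S))"
    using val_mono[OF a] lev_mono[of _ "insert _ _" i] by (meson subset_insertI)
  ultimately show ?thesis
    unfolding valid_cost_def cst_def using val_nonneg[OF a] lev_empty by auto
qed

lemma range_val: "range (val a) \<subseteq> {0,1,2*a,4*a^2}"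
  by (auto simp: val_def)

lemma mms_ge:
  assumes "1 \<le> a"
    and "\<And>Y. is_partition 3 {0..<6::nat} Y \<Longrightarrow> v \<le> Max ((\<lambda>k. cst a i (Y k)) ` {..<3})"
  shows "v \<le> mms 3 {0..<6} (cst a i)"
proof -
  let ?A = "{Max ((\<lambda>k. cst a i (Y k)) ` {..<3}) | Y. is_partition 3 {0..<6::nat} Y}"
  have "?A \<subseteq> range (val a)"
  proof
    fix x assume "x \<in> ?A"
    then obtain Y where x: "x = Max ((\<lambda>k. cst a i (Y k)) ` {..<(3::nat)})" by auto
    have "x \<in> (\<lambda>k. cst a i (Y k)) ` {..<3}" unfolding x
      by (rule Max_in) (auto simp: lessThan_empty_iff)
    then show "x \<in> range (val a)" by (auto simp: cst_def)
  qed
  then have fin: "finite ?A" using range_val finite_subset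
    by (metis (no_types, lifting) finite.emptyI finite.insertI)
  define Y0 where "Y0 = (\<lambda>i::nat. if i = 0 then {0..<6::nat} else {})"
  have "is_partition 3 {0..<6} Y0"
    unfolding is_partition_def Y0_def by (auto simp: lessThan_nat_numeral)
  then have ne: "?A \<noteq> {}" by blast
  show ?thesis unfolding mms_def
    using fin ne assms(2) by (auto intro!: Min.boundedI)
qed

theorem corollary1:
  fixes \<alpha> :: real
  assumes "\<alpha> \<ge> 1"
  shows "\<exists>(M :: nat set) (c :: nat \<Rightarrow> nat set \<Rightarrow> real).
           chore_instance 3 M c
         \<and> (\<exists>X. is_partition 3 M X \<and> is_MMS 3 M c X)
         \<and> \<not> (\<exists>X. is_partition 3 M X \<and> alpha_EFX \<alpha> 3 c X)"
proof (rule exI[of _ "{0..<6::nat}"], rule exI[of _ "cst \<alpha>"], intro conjI)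
  let ?M = "{0..<6::nat}"
  let ?c = "cst \<alpha>"
  show "chore_instance 3 ?M ?c"
    unfolding chore_instance_def using valid[OF assms] by auto
  define X0 where "X0 = (\<lambda>i::nat. if i = 0 then {0..<6::nat} else {})"
  have part0: "is_partition 3 ?M X0"
    unfolding is_partition_def X0_def by (auto simp: lessThan_nat_numeral)
  have mms_nonneg: "0 \<le> mms 3 ?M (?c i)" for i
  proof (rule mms_ge[OF assms])
    fix Y assume "is_partition 3 ?M Y"
    have "0 \<le> ?c i (Y 0)" unfolding cst_def using val_nonneg[OF assms] .
    also have "\<dots> \<le> Max ((\<lambda>k. ?c i (Y k)) ` {..<3})" by (rule Max_ge) auto
    finally show "0 \<le> Max ((\<lambda>k. ?c i (Y k)) ` {..<3})" .
  qed
  have mms0: "?c 0 ?M \<le> mms 3 ?M (?c 0)"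
  proof (rule mms_ge[OF assms])
    fix Y assume Y: "is_partition 3 ?M Y"
    have cov: "(\<Union>i<3. Y i) = ?M" using Y unfolding is_partition_def by auto
    have "\<forall>x\<in>{0,1,2,4::nat}. \<exists>k<3. x \<in> Y k" using cov by auto
    then obtain k0 k1 k2 k4 where k: "k0 < 3" "0 \<in> Y k0" "k1 < 3" "1 \<in> Y k1"
      "k2 < 3" "2 \<in> Y k2" "k4 < 3" "4 \<in> Y k4" by auto
    have "k0 = k1 \<or> k0 = k2 \<or> k0 = k4 \<or> k1 = k2 \<or> k1 = k4 \<or> k2 = k4"
      using k by linarith
    then obtain k where kk: "k < 3" "up 0 3 (Y k)"
      using k unfolding up_def gens_def by (elim disjE) fastforce+
    have "lev 0 ?M \<le> lev 0 (Y k)"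
    proof -
      have "lev 0 (Y k) = 3" using kk(2) by (simp add: lev_def)
      then show ?thesis using lev_le3[of 0 ?M] by simp
    qed
    then have "?c 0 ?M \<le> ?c 0 (Y k)" unfolding cst_def using val_mono[OF assms] by blast
    also have "\<dots> \<le> Max ((\<lambda>k. ?c 0 (Y k)) ` {..<3})" by (rule Max_ge) (use kk in auto)
    finally show "?c 0 ?M \<le> Max ((\<lambda>k. ?c 0 (Y k)) ` {..<3})" .
  qed
  have "is_MMS 3 ?M ?c X0"
    unfolding is_MMS_def
  proof (intro allI impI)
    fix i :: nat assume "i < 3"
    show "?c i (X0 i) \<le> mms 3 ?M (?c i)"
    proof (cases "i = 0")
      case True then show ?thesis using mms0 by (simp add: X0_def)
    next
      case False then show ?thesis using mms_nonneg[of i]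
        by (simp add: X0_def cst_def lev_empty val_def)
    qed
  qed
  then show "\<exists>X. is_partition 3 ?M X \<and> is_MMS 3 ?M ?c X" using part0 by blast
  show "\<not> (\<exists>X. is_partition 3 ?M X \<and> alpha_EFX \<alpha> 3 ?c X)"
  proof
    assume "\<exists>X. is_partition 3 ?M X \<and> alpha_EFX \<alpha> 3 ?c X"
    then obtain X where X: "is_partition 3 ?M X" "alpha_EFX \<alpha> 3 ?c X" by blast
    obtain g where g: "length g = 6" "set g \<subseteq> {0,1,2}" "\<forall>i<3. X i = bund g i"
      using part_repr[OF X(1)] by blast
    obtain i e j where v: "i < 3" "e \<in> bund g i" "j < 3"
      "lev i (bund g j) < lev i (bund g i - {e})"
      using comb_g[OF g(1,2)] by blast
    have ij: "i < 3" "j < 3" using v by auto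
    have "?c i (X i - {e}) \<le> \<alpha> * ?c i (X j)"
      using X(2) ij v(2) g(3) unfolding alpha_EFX_def by auto
    moreover have "\<not> ?c i (X i - {e}) \<le> \<alpha> * ?c i (X j)"
      using viol[OF assms v(4) lev_le3] g(3) ij by (simp add: cst_def)
    ultimately show False by blast
  qed
qed

end
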